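(* Consider three unit point masses in $\mathbb{R}^2$ with positions $q_i=(x_i,z_i)$, configuration space $Q=\{q=(q_1,q_2,q_3)\in\mathbb{R}^6: q_i\neq q_j\ (i\neq j)\}$, and total potential energy $$U(q)=\frac{\kappa_s}{2}\sum_{k=1}^3(\ell_k-\bar\ell_k)^2+\kappa_{\mathrm{np}}\sum_{i=1}^3\chi(z_i)+\sum_{i=1}^3 z_i,$$ where $\ell_k=\|q_i-q_j\|$ for $\{i,j,k\}=\{1,2,3\}$ and $\chi(s)=\tfrac12 s^2$ for $s<0$, $\chi(s)=0$ for $s\ge 0$. $U$ is invariant under the translations $x_i\mapsto x_i+g$ ($g\in\mathbb{R}$), so $U=\hat U\circ\pi$ for a reduced potential $\hat U$ on $Q/\mathbb{R}$. Assume that the rest lengths $\bar\ell_1,\bar\ell_2,\bar\ell_3>0$ form a non-degenerate triangle and that $\kappa_s,\kappa_{\mathrm{np}}>0$ are sufficiently large. Then there exists a local minimum $\hat q_*\in Q/\mathbb{R}$ of $\hat U$ that is non-degenerate, i.e. the Hessian of $\hat U$ at $\hat q_*$ is positive definite.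
   Context: Following the paper, $\chi$ may be tacitly replaced by a smooth function agreeing with it outside an arbitrarily small neighborhood of $0$. $Q/\mathbb{R}$ is the quotient of $Q$ by the free proper action $(x_1,z_1,x_2,z_2,x_3,z_3)\mapsto(x_1+g,z_1,x_2+g,z_2,x_3+g,z_3)$ of $(\mathbb{R},+)$. *)

theory Defs
  imports "HOL-Analysis.Analysis"
begin

type_synonym point = "real \<times> real"   (* q_i = (x_i, z_i) *)
type_synonym config = "point \<times> point \<times> point"
(* coordinates of Q/R via the global slice x_1 = 0: (z_1, x_2, z_2, x_3, z_3) *)
type_synonym rconfig = "real \<times> real \<times> real \<times> real \<times> real"

definition chi :: "real \<Rightarrow> real" where
  "chi s = (if s < 0 then s\<^sup>2 / 2 else 0)"

definition config_space :: "config set" where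
  "config_space = {(q1, q2, q3). q1 \<noteq> q2 \<and> q1 \<noteq> q3 \<and> q2 \<noteq> q3}"

(* total potential energy; l1 l2 l3 are the rest lengths,
   l_k = |q_i - q_j| with {i,j,k} = {1,2,3} *)
definition U :: "real \<Rightarrow> real \<Rightarrow> real \<Rightarrow> real \<Rightarrow> real \<Rightarrow> config \<Rightarrow> real" where
  "U ks knp l1 l2 l3 q = (case q of (q1, q2, q3) \<Rightarrow>
      ks / 2 * ((dist q2 q3 - l1)\<^sup>2 + (dist q1 q3 - l2)\<^sup>2 + (dist q1 q2 - l3)\<^sup>2)
      + knp * (chi (snd q1) + chi (snd q2) + chi (snd q3))
      + (snd q1 + snd q2 + snd q3))"

definition sect :: "rconfig \<Rightarrow> config" where
  "sect y = (case y of (z1, x2, z2, x3, z3) \<Rightarrow> ((0, z1), (x2, z2), (x3, z3)))"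

definition rconfig_space :: "rconfig set" where
  "rconfig_space = {y. sect y \<in> config_space}"

definition Uhat :: "real \<Rightarrow> real \<Rightarrow> real \<Rightarrow> real \<Rightarrow> real \<Rightarrow> rconfig \<Rightarrow> real" where
  "Uhat ks knp l1 l2 l3 y = U ks knp l1 l2 l3 (sect y)"

definition nondeg_local_min :: "('a::euclidean_space \<Rightarrow> real) \<Rightarrow> 'a set \<Rightarrow> 'a \<Rightarrow> bool" where
  "nondeg_local_min f S p \<longleftrightarrow>
     (\<exists>e>0. ball p e \<subseteq> S \<and> (\<forall>y\<in>ball p e. f p \<le> f y) \<and>
       (\<exists>Df H. (\<forall>y\<in>ball p e. (f has_derivative Df y) (at y)) \<and>
              (\<forall>h. ((\<lambda>y. Df y h) has_derivative H h) (at p)) \<and>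
              (\<forall>h. h \<noteq> 0 \<longrightarrow> H h h > 0)))"

end

theory Submission
  imports Defs
begin


definition c1 :: "rconfig \<Rightarrow> real" where "c1 y = fst y"
definition c2 :: "rconfig \<Rightarrow> real" where "c2 y = fst (snd y)"
definition c3 :: "rconfig \<Rightarrow> real" where "c3 y = fst (snd (snd y))"
definition c4 :: "rconfig \<Rightarrow> real" where "c4 y = fst (snd (snd (snd y)))"
definition c5 :: "rconfig \<Rightarrow> real" where "c5 y = snd (snd (snd (snd y)))"

lemma c_simps[simp]: "c1 (a,b,c,d,e) = a" "c2 (a,b,c,d,e) = b" "c3 (a,b,c,d,e) = c"
  "c4 (a,b,c,d,e) = d" "c5 (a,b,c,d,e) = e"
  by (simp_all add: c1_def c2_def c3_def c4_def c5_def)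

lemma bl_c: "bounded_linear c1" "bounded_linear c2" "bounded_linear c3" "bounded_linear c4" "bounded_linear c5"
  unfolding c1_def c2_def c3_def c4_def c5_def
  by (auto intro!: bounded_linear_compose[OF bounded_linear_fst] bounded_linear_compose[OF bounded_linear_snd]
      bounded_linear_fst bounded_linear_snd)

lemma spring_D:
  fixes a b :: "'a::real_normed_vector \<Rightarrow> real"
  assumes la: "bounded_linear a" and lb: "bounded_linear b" and pos: "a y^2 + b y^2 > 0"
  shows "((\<lambda>y. k/2 * (sqrt (a y^2 + b y^2) - L)^2) has_derivative
     (\<lambda>h. k*(sqrt(a y^2+b y^2) - L)/sqrt(a y^2+b y^2) * (a y * a h + b y * b h))) (at y)"
proof -
  have da: "(a has_derivative a) (at y)" using la by (rule bounded_linear_imp_has_derivative)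
  have db: "(b has_derivative b) (at y)" using lb by (rule bounded_linear_imp_has_derivative)
  have sp: "sqrt (a y^2 + b y^2) > 0" using pos by simp
  show ?thesis
    apply (rule derivative_eq_intros da db pos | simp)+
    using sp unfolding power2_eq_square by (auto simp: fun_eq_iff divide_simps)
qed


lemma spring_H:
  fixes a b :: "'a::real_normed_vector \<Rightarrow> real"
  assumes la: "bounded_linear a" and lb: "bounded_linear b" and pos: "a y^2 + b y^2 > 0"
  shows "((\<lambda>y. k*(sqrt(a y^2+b y^2) - L)/sqrt(a y^2+b y^2) * (a y * a h + b y * b h)) has_derivative
     (\<lambda>m. k*((1 - L/sqrt(a y^2+b y^2))*(a h*a m + b h*b m)
        + L/sqrt(a y^2+b y^2)^3*(a y*a h + b y*b h)*(a y*a m + b y*b m)))) (at y)"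
proof -
  have da: "(a has_derivative a) (at y)" using la by (rule bounded_linear_imp_has_derivative)
  have db: "(b has_derivative b) (at y)" using lb by (rule bounded_linear_imp_has_derivative)
  have sp: "sqrt (a y^2 + b y^2) > 0" using pos by simp
  have sq: "sqrt (a y^2 + b y^2)^2 = a y^2 + b y^2" using pos by simp
  define N where "N = sqrt (a y^2 + b y^2)"
  have dN: "((\<lambda>y. sqrt (a y^2 + b y^2)) has_derivative (\<lambda>m. (a y * a m + b y * b m)/N)) (at y)"
    unfolding N_def
    apply (rule derivative_eq_intros da db pos refl)+
    using sp by (auto simp: fun_eq_iff divide_simps power2_eq_square)
  have df2: "((\<lambda>y. a y * a h + b y * b h) has_derivative (\<lambda>m. a m * a h + b m * b h)) (at y)"
    by (rule derivative_eq_intros da db refl)+ simp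
  have df1: "((\<lambda>y. k*(sqrt(a y^2+b y^2) - L)/sqrt(a y^2+b y^2)) has_derivative
      (\<lambda>m. k*L*(a y * a m + b y * b m)/N^3)) (at y)"
    apply (rule has_derivative_eq_rhs)
     apply (rule dN | rule derivative_intros)+
    using sp unfolding N_def[symmetric] by (auto simp: fun_eq_iff divide_simps power3_eq_cube) (simp add: algebra_simps)
  show ?thesis
    apply (rule has_derivative_eq_rhs[OF has_derivative_mult[OF df1 df2]])
    using sp unfolding N_def[symmetric] by (auto simp: fun_eq_iff divide_simps power3_eq_cube) (simp add: algebra_simps)
qed

definition "d12x y = c2 y"
definition "d12z y = c3 y - c1 y"
definition "d13x y = c4 y"
definition "d13z y = c5 y - c1 y"
definition "d23x y = c4 y - c2 y"
definition "d23z y = c5 y - c3 y"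

lemmas d_defs = d12x_def d12z_def d13x_def d13z_def d23x_def d23z_def

lemma bl_d: "bounded_linear d12x" "bounded_linear d12z" "bounded_linear d13x"
   "bounded_linear d13z" "bounded_linear d23x" "bounded_linear d23z"
  unfolding d_defs[abs_def] using bl_c by (auto intro!: bounded_linear_sub)

definition NN :: "(rconfig \<Rightarrow> real) \<Rightarrow> (rconfig \<Rightarrow> real) \<Rightarrow> rconfig \<Rightarrow> real" where
  "NN a b y = sqrt (a y^2 + b y^2)"

definition SD :: "real \<Rightarrow> real \<Rightarrow> (rconfig \<Rightarrow> real) \<Rightarrow> (rconfig \<Rightarrow> real) \<Rightarrow> rconfig \<Rightarrow> rconfig \<Rightarrow> real" where
  "SD k L a b y h = k*(NN a b y - L)/NN a b y * (a y * a h + b y * b h)"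

definition SH :: "real \<Rightarrow> real \<Rightarrow> (rconfig \<Rightarrow> real) \<Rightarrow> (rconfig \<Rightarrow> real) \<Rightarrow> rconfig \<Rightarrow> rconfig \<Rightarrow> rconfig \<Rightarrow> real" where
  "SH k L a b y h m = k*((1 - L/NN a b y)*(a h*a m + b h*b m)
        + L/NN a b y^3*(a y*a h + b y*b h)*(a y*a m + b y*b m))"

definition gfun :: "real \<Rightarrow> real \<Rightarrow> real \<Rightarrow> real \<Rightarrow> real \<Rightarrow> rconfig \<Rightarrow> real" where
  "gfun ks knp l1 l2 l3 y = ks/2*(NN d23x d23z y - l1)^2 + ks/2*(NN d13x d13z y - l2)^2
     + ks/2*(NN d12x d12z y - l3)^2 + (knp*(c1 y^2/2 + c3 y^2/2) + (c1 y + c3 y + c5 y))"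

definition Dg :: "real \<Rightarrow> real \<Rightarrow> real \<Rightarrow> real \<Rightarrow> real \<Rightarrow> rconfig \<Rightarrow> rconfig \<Rightarrow> real" where
  "Dg ks knp l1 l2 l3 y h = SD ks l1 d23x d23z y h + SD ks l2 d13x d13z y h + SD ks l3 d12x d12z y h
     + (knp*(c1 y * c1 h + c3 y * c3 h) + (c1 h + c3 h + c5 h))"

definition Hg :: "real \<Rightarrow> real \<Rightarrow> real \<Rightarrow> real \<Rightarrow> real \<Rightarrow> rconfig \<Rightarrow> rconfig \<Rightarrow> rconfig \<Rightarrow> real" where
  "Hg ks knp l1 l2 l3 y h m = SH ks l1 d23x d23z y h m + SH ks l2 d13x d13z y h m + SH ks l3 d12x d12z y h m
     + knp*(c1 h * c1 m + c3 h * c3 m)"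

definition Sm :: "rconfig set" where
  "Sm = {y. 0 < d12x y^2 + d12z y^2 \<and> 0 < d13x y^2 + d13z y^2 \<and> 0 < d23x y^2 + d23z y^2}"

lemma rest_D: "((\<lambda>y. knp*(c1 y^2/2 + c3 y^2/2) + (c1 y + c3 y + c5 y)) has_derivative
    (\<lambda>h. knp*(c1 y * c1 h + c3 y * c3 h) + (c1 h + c3 h + c5 h))) (at y)"
proof -
  note dc = bl_c[THEN bounded_linear_imp_has_derivative]
  show ?thesis
    apply (rule has_derivative_eq_rhs)
     apply (rule derivative_intros dc | simp)+
    by (simp add: fun_eq_iff algebra_simps power2_eq_square)
qed

lemma rest_H: "((\<lambda>y. knp*(c1 y * c1 h + c3 y * c3 h) + (c1 h + c3 h + c5 h)) has_derivative
    (\<lambda>m. knp*(c1 h * c1 m + c3 h * c3 m))) (at y)"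
proof -
  note dc = bl_c[THEN bounded_linear_imp_has_derivative]
  show ?thesis
    apply (rule has_derivative_eq_rhs)
     apply (rule derivative_intros dc | simp)+
    by (simp add: fun_eq_iff algebra_simps power2_eq_square)
qed

lemma g_D: assumes "y \<in> Sm" shows "(gfun ks knp l1 l2 l3 has_derivative Dg ks knp l1 l2 l3 y) (at y)"
proof -
  have p: "0 < d12x y^2 + d12z y^2" "0 < d13x y^2 + d13z y^2" "0 < d23x y^2 + d23z y^2"
    using assms by (auto simp: Sm_def)
  note s1 = spring_D[OF bl_d(5,6) p(3), of ks l1]
  note s2 = spring_D[OF bl_d(3,4) p(2), of ks l2]
  note s3 = spring_D[OF bl_d(1,2) p(1), of ks l3]
  show ?thesis unfolding gfun_def[abs_def] Dg_def[abs_def] SD_def NN_def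
    by (rule has_derivative_add[OF has_derivative_add[OF has_derivative_add[OF s1 s2] s3] rest_D])
qed

lemma Dg_H: assumes "y \<in> Sm" shows "((\<lambda>y. Dg ks knp l1 l2 l3 y h) has_derivative Hg ks knp l1 l2 l3 y h) (at y)"
proof -
  have p: "0 < d12x y^2 + d12z y^2" "0 < d13x y^2 + d13z y^2" "0 < d23x y^2 + d23z y^2"
    using assms by (auto simp: Sm_def)
  note s1 = spring_H[OF bl_d(5,6) p(3), of ks l1 h]
  note s2 = spring_H[OF bl_d(3,4) p(2), of ks l2 h]
  note s3 = spring_H[OF bl_d(1,2) p(1), of ks l3 h]
  show ?thesis unfolding Hg_def[abs_def] Dg_def[abs_def] SD_def SH_def NN_def
    by (rule has_derivative_add[OF has_derivative_add[OF has_derivative_add[OF s1 s2] s3] rest_H])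
qed

definition Om :: "rconfig set" where
  "Om = {y. 0 < d12x y^2 + d12z y^2 \<and> 0 < d13x y^2 + d13z y^2 \<and> 0 < d23x y^2 + d23z y^2
     \<and> c1 y < 0 \<and> c3 y < 0 \<and> 0 < c5 y}"

lemma Om_Sm: "Om \<subseteq> Sm" by (auto simp: Om_def Sm_def)

lemma cont_c: "continuous_on S c1" "continuous_on S c2" "continuous_on S c3" "continuous_on S c4" "continuous_on S c5"
  using bl_c by (auto intro: linear_continuous_on)
lemma cont_d: "continuous_on S d12x" "continuous_on S d12z" "continuous_on S d13x" "continuous_on S d13z"
  "continuous_on S d23x" "continuous_on S d23z"
  using bl_d by (auto intro: linear_continuous_on)

lemma open_Om: "open Om"
proof -
  have e: "Om = {y. 0 < d12x y^2 + d12z y^2} \<inter> {y. 0 < d13x y^2 + d13z y^2} \<inter> {y. 0 < d23x y^2 + d23z y^2}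
     \<inter> {y. c1 y < 0} \<inter> {y. c3 y < 0} \<inter> {y. 0 < c5 y}" by (auto simp: Om_def)
  show ?thesis unfolding e
    by (intro open_Int open_Collect_less continuous_intros cont_c cont_d)
qed

lemma Uhat_g: assumes "y \<in> Om" shows "Uhat ks knp l1 l2 l3 y = gfun ks knp l1 l2 l3 y"
proof -
  obtain z1 x2 z2 x3 z3 where y: "y = (z1,x2,z2,x3,z3)" by (cases y) auto
  have "z1 < 0" "z2 < 0" "z3 > 0" using assms by (auto simp: Om_def y)
  then show ?thesis unfolding y Uhat_def U_def sect_def gfun_def NN_def d_defs chi_def
    by (simp add: dist_Pair_Pair dist_real_def power2_commute distrib_left)
qed

lemma Om_space: assumes "y \<in> Om" shows "y \<in> rconfig_space"
proof -
  obtain z1 x2 z2 x3 z3 where y: "y = (z1,x2,z2,x3,z3)" by (cases y) auto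
  show ?thesis using assms unfolding y rconfig_space_def sect_def config_space_def Om_def d_defs
    by auto
qed




lemma line_deriv:
  fixes F :: "'a::real_normed_vector \<Rightarrow> real"
  assumes "(F has_derivative F') (at (p + t *\<^sub>R v))"
  shows "((\<lambda>t. F (p + t *\<^sub>R v)) has_real_derivative F' v) (at t)"
proof -
  have l: "((\<lambda>t. p + t *\<^sub>R v) has_derivative (\<lambda>s. s *\<^sub>R v)) (at t)"
    by (rule derivative_eq_intros refl)+ simp
  have c: "((\<lambda>t. F (p + t *\<^sub>R v)) has_derivative (\<lambda>s. F' (s *\<^sub>R v))) (at t)"
    using has_derivative_compose[OF l assms] by simp
  have bl: "bounded_linear F'" using assms by (rule has_derivative_bounded_linear)
  have "(\<lambda>s. F' (s *\<^sub>R v)) = (*) (F' v)"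
    using linear.scaleR[OF bounded_linear.linear[OF bl]] by (auto simp: fun_eq_iff)
  then show ?thesis using c unfolding has_field_derivative_def by simp
qed

lemma tube_pos:
  fixes G :: "'a::metric_space \<Rightarrow> 'b::metric_space \<Rightarrow> real"
  assumes K: "compact K" "K \<noteq> {}" and C: "compact C" and p: "p \<in> C"
    and cont: "continuous_on (C \<times> K) (\<lambda>z. G (fst z) (snd z))"
    and pos: "\<And>h. h \<in> K \<Longrightarrow> G p h > 0"
  shows "\<exists>d>0. \<forall>y\<in>C. dist y p < d \<longrightarrow> (\<forall>h\<in>K. G y h > 0)"
proof -
  have cK: "continuous_on K (G p)"
    by (rule continuous_on_compose2[OF cont, of K "\<lambda>h. (p,h)", simplified])
       (auto intro!: continuous_intros simp: p)
  obtain h0 where h0: "h0 \<in> K" "\<forall>h\<in>K. G p h0 \<le> G p h"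
    using continuous_attains_inf[OF K cK] by auto
  define c where "c = G p h0"
  have c: "c > 0" using pos h0 by (simp add: c_def)
  have uc: "uniformly_continuous_on (C \<times> K) (\<lambda>z. G (fst z) (snd z))"
    by (rule compact_uniformly_continuous[OF cont compact_Times[OF C K(1)]])
  obtain d where d: "d > 0" "\<forall>x\<in>C \<times> K. \<forall>x'\<in>C \<times> K. dist x' x < d \<longrightarrow>
       dist (G (fst x') (snd x')) (G (fst x) (snd x)) < c"
    using uc c unfolding uniformly_continuous_on_def by metis
  show ?thesis
  proof (intro exI[of _ d] conjI d ballI impI)
    fix y h assume y: "y \<in> C" "dist y p < d" and h: "h \<in> K"
    have "dist (y,h) (p,h) < d" using y by (simp add: dist_Pair_Pair)
    then have "dist (G y h) (G p h) < c" using d(2) y h p by force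
    moreover have "G p h \<ge> c" using h0 h by (simp add: c_def)
    ultimately show "G y h > 0" by (auto simp: dist_real_def)
  qed
qed

lemma nondeg_crit:
  fixes f :: "'a::euclidean_space \<Rightarrow> real"
  assumes W: "open W" "p \<in> W" "W \<subseteq> S"
    and fD: "\<And>y. y \<in> W \<Longrightarrow> (f has_derivative Df y) (at y)"
    and DH: "\<And>y h. y \<in> W \<Longrightarrow> ((\<lambda>y. Df y h) has_derivative H y h) (at y)"
    and crit: "\<And>h. Df p h = 0"
    and cont: "continuous_on (W \<times> sphere 0 1) (\<lambda>z. H (fst z) (snd z) (snd z))"
    and hom: "\<And>y h c. y \<in> W \<Longrightarrow> H y (c *\<^sub>R h) (c *\<^sub>R h) = c^2 * H y h h"
    and pd: "\<And>h. h \<noteq> 0 \<Longrightarrow> H p h h > 0"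
  shows "nondeg_local_min f S p"
proof -
  obtain r where r: "r > 0" "cball p r \<subseteq> W" using open_contains_cball W by blast
  have sph: "sphere (0::'a) 1 \<noteq> {}" by simp
  have "\<exists>d>0. \<forall>y\<in>cball p r. dist y p < d \<longrightarrow> (\<forall>h\<in>sphere 0 1. H y h h > 0)"
    apply (rule tube_pos[where G="\<lambda>y h. H y h h"])
        apply (simp_all add: sph r less_imp_le)
     apply (rule continuous_on_subset[OF cont]) using r apply blast
    using pd by (metis norm_zero zero_neq_one mem_sphere_0)
  then obtain d where d: "d > 0" "\<And>y h. y \<in> cball p r \<Longrightarrow> dist y p < d \<Longrightarrow> h \<in> sphere 0 1 \<Longrightarrow> H y h h > 0"
    by blast
  define e where "e = min d r"
  have e: "e > 0" using d r by (simp add: e_def)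
  have bO: "ball p e \<subseteq> W" using r by (auto simp: e_def)
  have Hpos: "H y h h > 0" if y: "y \<in> ball p e" and h: "h \<noteq> 0" for y h
  proof -
    have y1: "y \<in> cball p r" "dist y p < d" using y by (auto simp: e_def dist_commute)
    have "h /\<^sub>R norm h \<in> sphere 0 1" using h by simp
    then have "H y (h /\<^sub>R norm h) (h /\<^sub>R norm h) > 0" using d(2) y1 by blast
    moreover have "H y h h = (norm h)^2 * H y (h /\<^sub>R norm h) (h /\<^sub>R norm h)"
      using hom[of y "norm h" "h /\<^sub>R norm h"] bO y h by auto
    ultimately show ?thesis using h by simp
  qed
  have lmin: "f p \<le> f y" if y: "y \<in> ball p e" for y
  proof (cases "y = p")
    case True then show ?thesis by simp
  next
    case False
    define v where "v = y - p"
    have v: "v \<noteq> 0" using False by (simp add: v_def)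
    have inb: "p + t *\<^sub>R v \<in> ball p e" if "0 \<le> t" "t \<le> 1" for t
    proof -
      have "norm (t *\<^sub>R v) \<le> norm v" using that by (simp add: mult_left_le_one_le)
      then show ?thesis using y by (simp add: dist_norm v_def norm_minus_commute)
    qed
    have psi: "((\<lambda>t. Df (p + t *\<^sub>R v) v) has_real_derivative H (p + t *\<^sub>R v) v v) (at t)"
      if "0 \<le> t" "t \<le> 1" for t
      by (rule line_deriv[OF DH]) (use inb[OF that] bO in auto)
    have psi_nn: "Df (p + t *\<^sub>R v) v \<ge> 0" if "0 \<le> t" "t \<le> 1" for t
    proof -
      have "Df (p + 0 *\<^sub>R v) v \<le> Df (p + t *\<^sub>R v) v"
        apply (rule DERIV_nonneg_imp_nondecreasing[OF that(1)])
        using psi Hpos inb v that by (meson dual_order.trans less_imp_le)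
      then show ?thesis using crit by simp
    qed
    have "f (p + 0 *\<^sub>R v) \<le> f (p + 1 *\<^sub>R v)"
      apply (rule DERIV_nonneg_imp_nondecreasing[of 0 1])
       apply simp
      using line_deriv[OF fD] inb bO psi_nn by blast
    then show ?thesis by (simp add: v_def)
  qed
  show ?thesis unfolding nondeg_local_min_def
    apply (rule exI[of _ e])
    using e bO W(3) lmin fD DH pd W(2) by (blast)
qed




context fixes l1 l2 l3 :: real begin
definition nA :: "rconfig \<Rightarrow> real \<times> real \<Rightarrow> real" where "nA w e = l1 + fst e * c1 w"
definition nB :: "rconfig \<Rightarrow> real \<times> real \<Rightarrow> real" where "nB w e = l2 + fst e * c2 w"
definition nC :: "rconfig \<Rightarrow> real \<times> real \<Rightarrow> real" where "nC w e = l3 + fst e * c3 w"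
definition zA :: "rconfig \<Rightarrow> real \<times> real \<Rightarrow> real" where "zA w e = - (snd e * c4 w)"
definition zB :: "rconfig \<Rightarrow> real \<times> real \<Rightarrow> real" where "zB w e = - (snd e * c5 w)"
definition gX2 :: "rconfig \<Rightarrow> real \<times> real \<Rightarrow> real" where "gX2 w e = sqrt (nC w e ^2 - (zB w e - zA w e)^2)"
definition gT :: "rconfig \<Rightarrow> real \<times> real \<Rightarrow> real" where "gT w e = (nB w e^2 + nC w e^2 - nA w e^2)/(2*nC w e)"
definition gH :: "rconfig \<Rightarrow> real \<times> real \<Rightarrow> real" where "gH w e = sqrt (nB w e^2 - gT w e^2)"
definition gX3 :: "rconfig \<Rightarrow> real \<times> real \<Rightarrow> real" where "gX3 w e = (gT w e * gX2 w e - gH w e * (zB w e - zA w e))/nC w e"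
definition gZ3 :: "rconfig \<Rightarrow> real \<times> real \<Rightarrow> real" where "gZ3 w e = zA w e + (gT w e * (zB w e - zA w e) + gH w e * gX2 w e)/nC w e"
definition geo :: "rconfig \<Rightarrow> real \<times> real \<Rightarrow> rconfig" where "geo w e = (zA w e, gX2 w e, zB w e, gX3 w e, gZ3 w e)"
definition gD :: "rconfig \<Rightarrow> real \<times> real \<Rightarrow> real" where "gD w e = gX3 w e * (gZ3 w e - zB w e) - (gX3 w e - gX2 w e) * (gZ3 w e - zA w e)"
definition t13 :: "rconfig \<Rightarrow> real \<times> real \<Rightarrow> real" where "t13 w e = (gX3 w e - gX2 w e)/gD w e"
definition t23 :: "rconfig \<Rightarrow> real \<times> real \<Rightarrow> real" where "t23 w e = - gX3 w e / gD w e"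
definition t12 :: "rconfig \<Rightarrow> real \<times> real \<Rightarrow> real" where "t12 w e = t23 w e * (gX3 w e - gX2 w e)/gX2 w e"
definition Psi :: "rconfig \<Rightarrow> real \<times> real \<Rightarrow> rconfig" where "Psi w e = (t23 w e * nA w e, t13 w e * nB w e, t12 w e * nC w e,
     1 - t12 w e*(zB w e - zA w e) - t13 w e*(gZ3 w e - zA w e),
     1 + t12 w e*(zB w e - zA w e) - t23 w e*(gZ3 w e - zB w e))"
definition good :: "rconfig \<Rightarrow> real \<times> real \<Rightarrow> bool" where "good w e \<longleftrightarrow> 0 < nC w e \<and> (zB w e - zA w e)^2 < nC w e^2 \<and>
   nA w e < nB w e + nC w e \<and> nB w e < nA w e + nC w e \<and> nC w e < nA w e + nB w e"
end

lemma heron: "4*b^2*c^2 - (b^2+c^2-a^2)^2 = (a+b+c)*(-a+b+c)*(a-b+c)*(a+b-(c::real))"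
  by algebra

lemma good_facts:
  assumes "good l1 l2 l3 w e"
  shows "nA l1 w e > 0" "nB l2 w e > 0" "nC l3 w e > 0" "gX2 l3 w e > 0" "gH l1 l2 l3 w e > 0"
    "gX2 l3 w e ^2 + (zB w e - zA w e)^2 = nC l3 w e^2"
    "gH l1 l2 l3 w e ^2 = nB l2 w e^2 - gT l1 l2 l3 w e^2"
proof -
  note g = assms[unfolded good_def]
  show a: "nA l1 w e > 0" "nB l2 w e > 0" "nC l3 w e > 0" using g by linarith+
  show "gX2 l3 w e > 0" using g by (simp add: gX2_def)
  show "gX2 l3 w e ^2 + (zB w e - zA w e)^2 = nC l3 w e^2" using g by (simp add: gX2_def)
  define a b c where "a = nA l1 w e" "b = nB l2 w e" "c = nC l3 w e"
  have pos: "(a+b+c)*(-a+b+c)*(a-b+c)*(a+b-c) > 0" using g a unfolding a_b_c_def by simp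
  have "b^2 - gT l1 l2 l3 w e^2 = (4*b^2*c^2 - (b^2+c^2-a^2)^2)/(4*c^2)"
    using a unfolding gT_def a_b_c_def by (simp add: field_simps power2_eq_square)
  also have "\<dots> > 0" using pos heron[of b c a] a unfolding a_b_c_def by simp
  finally have "b^2 - gT l1 l2 l3 w e^2 > 0" .
  then show "gH l1 l2 l3 w e > 0" "gH l1 l2 l3 w e ^2 = nB l2 w e^2 - gT l1 l2 l3 w e^2"
    unfolding gH_def a_b_c_def by simp_all
qed

lemma tri_alg:
  fixes X dz T Hh n1 n2 n3 X3 Z :: real
  assumes n3: "n3 > 0" and h1: "X^2 + dz^2 = n3^2" and h2: "Hh^2 = n2^2 - T^2"
    and hT: "2*n3*T = n2^2+n3^2-n1^2" and hX: "n3*X3 = T*X - Hh*dz" and hZ: "n3*Z = T*dz + Hh*X"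
  shows "X3^2 + Z^2 = n2^2" "(X3 - X)^2 + (Z - dz)^2 = n1^2" "X3*(Z - dz) - (X3 - X)*Z = Hh*n3"
proof -
  have "n3^2*(X3^2 + Z^2) = n3^2*n2^2" using h1 h2 hX hZ by algebra
  then show "X3^2 + Z^2 = n2^2" using n3 by simp
  have "n3^2*((X3 - X)^2 + (Z - dz)^2) = n3^2*n1^2" using h1 h2 hX hZ hT by algebra
  then show "(X3 - X)^2 + (Z - dz)^2 = n1^2" using n3 by simp
  have "n3*(X3*(Z - dz) - (X3 - X)*Z) = n3*(Hh*n3)" using h1 h2 hX hZ hT by algebra
  then show "X3*(Z - dz) - (X3 - X)*Z = Hh*n3" using n3 by simp
qed

lemma d_geo[simp]: "d12x (geo l1 l2 l3 w e) = gX2 l3 w e" "d12z (geo l1 l2 l3 w e) = zB w e - zA w e"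
  "d13x (geo l1 l2 l3 w e) = gX3 l1 l2 l3 w e" "d13z (geo l1 l2 l3 w e) = gZ3 l1 l2 l3 w e - zA w e"
  "d23x (geo l1 l2 l3 w e) = gX3 l1 l2 l3 w e - gX2 l3 w e" "d23z (geo l1 l2 l3 w e) = gZ3 l1 l2 l3 w e - zB w e"
  "c1 (geo l1 l2 l3 w e) = zA w e" "c3 (geo l1 l2 l3 w e) = zB w e" "c5 (geo l1 l2 l3 w e) = gZ3 l1 l2 l3 w e"
  by (simp_all add: geo_def d_defs)

lemma geo_facts:
  assumes g: "good l1 l2 l3 w e"
  shows "NN d12x d12z (geo l1 l2 l3 w e) = nC l3 w e"
    "NN d13x d13z (geo l1 l2 l3 w e) = nB l2 w e"
    "NN d23x d23z (geo l1 l2 l3 w e) = nA l1 w e"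
    "gD l1 l2 l3 w e = gH l1 l2 l3 w e * nC l3 w e"
    "gD l1 l2 l3 w e > 0"
proof -
  note f = good_facts[OF g]
  have hT: "2*nC l3 w e*gT l1 l2 l3 w e = nB l2 w e^2+nC l3 w e^2-nA l1 w e^2"
    using f(3) by (simp add: gT_def)
  have hX: "nC l3 w e*gX3 l1 l2 l3 w e = gT l1 l2 l3 w e*gX2 l3 w e - gH l1 l2 l3 w e*(zB w e - zA w e)"
    using f(3) by (simp add: gX3_def)
  have hZ: "nC l3 w e*(gZ3 l1 l2 l3 w e - zA w e) = gT l1 l2 l3 w e*(zB w e - zA w e) + gH l1 l2 l3 w e*gX2 l3 w e"
    using f(3) by (simp add: gZ3_def)
  note t = tri_alg[OF f(3) f(6) f(7) hT hX hZ]
  show "NN d12x d12z (geo l1 l2 l3 w e) = nC l3 w e" using f(3,6) by (simp add: NN_def)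
  show "NN d13x d13z (geo l1 l2 l3 w e) = nB l2 w e" using f(2) t(1) by (simp add: NN_def)
  show "NN d23x d23z (geo l1 l2 l3 w e) = nA l1 w e" using f(1) t(2) by (simp add: NN_def)
  show "gD l1 l2 l3 w e = gH l1 l2 l3 w e * nC l3 w e" using t(3) by (simp add: gD_def algebra_simps)
  then show "gD l1 l2 l3 w e > 0" using f by simp
qed


lemma crit_alg0:
  fixes P Q R S X Z k1 k2 k3 k4 k5 a23 a13 t12 :: real
  assumes "t12*X = a23*R" "a23*R + a13*P = 0" "a23*S + a13*Q = -1"
  shows "a23*(R*(k4-k2) + S*(k5-k3)) + a13*(P*k4 + Q*(k5-k1)) + t12*(X*k2 + Z*(k3-k1))
   + (-(1 - t12*Z - a13*Q))*k1 + (-(1 + t12*Z - a23*S))*k3 + (k1+k3+k5) = 0"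
  using assms by algebra

lemma cram:
  fixes P Q R S :: real
  assumes D: "P*S - R*Q \<noteq> 0"
  shows "(-P/(P*S-R*Q))*R + (R/(P*S - R*Q))*P = 0" "(-P/(P*S-R*Q))*S + (R/(P*S - R*Q))*Q = -1"
proof -
  define Dv where "Dv = P*S - R*Q"
  have Dv: "Dv \<noteq> 0" using D by (simp add: Dv_def)
  have "(-P/Dv)*R + (R/Dv)*P = 0" by (simp add: field_simps)
  then show "(-P/(P*S-R*Q))*R + (R/(P*S - R*Q))*P = 0" by (simp add: Dv_def)
  have "(-P/Dv)*S + (R/Dv)*Q = (-Dv)/Dv" using Dv by (simp add: divide_simps) (simp add: Dv_def)
  also have "\<dots> = -1" using Dv by simp
  finally show "(-P/(P*S-R*Q))*S + (R/(P*S - R*Q))*Q = -1" by (simp add: Dv_def)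
qed

lemma crit_geo:
  assumes g: "good l1 l2 l3 w e" and fx: "Psi l1 l2 l3 w e = w"
    and ke: "ks * fst e = 1" and kn: "knp * snd e = 1"
  shows "Dg ks knp l1 l2 l3 (geo l1 l2 l3 w e) h = 0"
proof -
  note f = good_facts[OF g] and gf = geo_facts[OF g]
  define y where "y = geo l1 l2 l3 w e"
  have w1: "c1 w = t23 l1 l2 l3 w e * nA l1 w e" using arg_cong[OF fx, of c1] by (simp add: Psi_def)
  have w2: "c2 w = t13 l1 l2 l3 w e * nB l2 w e" using arg_cong[OF fx, of c2] by (simp add: Psi_def)
  have w3: "c3 w = t12 l1 l2 l3 w e * nC l3 w e" using arg_cong[OF fx, of c3] by (simp add: Psi_def)
  have w4: "c4 w = 1 - t12 l1 l2 l3 w e*(zB w e - zA w e) - t13 l1 l2 l3 w e*(gZ3 l1 l2 l3 w e - zA w e)"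
    using arg_cong[OF fx, of c4] by (simp add: Psi_def)
  have w5: "c5 w = 1 + t12 l1 l2 l3 w e*(zB w e - zA w e) - t23 l1 l2 l3 w e*(gZ3 l1 l2 l3 w e - zB w e)"
    using arg_cong[OF fx, of c5] by (simp add: Psi_def)
  have S1: "SD ks l1 d23x d23z y h = t23 l1 l2 l3 w e * (d23x y * d23x h + d23z y * d23z h)"
  proof -
    have "ks*(NN d23x d23z y - l1)/NN d23x d23z y = t23 l1 l2 l3 w e"
      using gf(3) f(1) w1 ke unfolding y_def nA_def by (simp add: field_simps)
    then show ?thesis unfolding SD_def by simp
  qed
  have S2: "SD ks l2 d13x d13z y h = t13 l1 l2 l3 w e * (d13x y * d13x h + d13z y * d13z h)"
  proof -
    have "ks*(NN d13x d13z y - l2)/NN d13x d13z y = t13 l1 l2 l3 w e"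
      using gf(2) f(2) w2 ke unfolding y_def nB_def by (simp add: field_simps)
    then show ?thesis unfolding SD_def by simp
  qed
  have S3: "SD ks l3 d12x d12z y h = t12 l1 l2 l3 w e * (d12x y * d12x h + d12z y * d12z h)"
  proof -
    have "ks*(NN d12x d12z y - l3)/NN d12x d12z y = t12 l1 l2 l3 w e"
      using gf(1) f(3) w3 ke unfolding y_def nC_def by (simp add: field_simps)
    then show ?thesis unfolding SD_def by simp
  qed
  have z: "knp * zA w e = - c4 w" "knp * zB w e = - c5 w" using kn unfolding zA_def zB_def
    by (simp_all add: algebra_simps)
  have D0: "gD l1 l2 l3 w e \<noteq> 0" "gX2 l3 w e \<noteq> 0" using gf(5) f(4) by auto
  have "Dg ks knp l1 l2 l3 y h = t23 l1 l2 l3 w e * (d23x y * d23x h + d23z y * d23z h)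
     + t13 l1 l2 l3 w e * (d13x y * d13x h + d13z y * d13z h)
     + t12 l1 l2 l3 w e * (d12x y * d12x h + d12z y * d12z h)
     + ((knp * zA w e) * c1 h + (knp * zB w e) * c3 h + (c1 h + c3 h + c5 h))"
    unfolding Dg_def S1 S2 S3 by (simp add: y_def algebra_simps)
  also have "\<dots> = 0"
  proof -
    note cr = cram[OF D0(1)[unfolded gD_def]]
    have e1: "t12 l1 l2 l3 w e * gX2 l3 w e = t23 l1 l2 l3 w e * (gX3 l1 l2 l3 w e - gX2 l3 w e)"
      using D0 by (simp add: t12_def)
    have e2: "t23 l1 l2 l3 w e * (gX3 l1 l2 l3 w e - gX2 l3 w e) + t13 l1 l2 l3 w e * gX3 l1 l2 l3 w e = 0"
      using cr(1) unfolding t23_def t13_def gD_def by simp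
    have e3: "t23 l1 l2 l3 w e * (gZ3 l1 l2 l3 w e - zB w e) + t13 l1 l2 l3 w e * (gZ3 l1 l2 l3 w e - zA w e) = -1"
      using cr(2) unfolding t23_def t13_def gD_def by simp
    show ?thesis
      unfolding z w4 w5 y_def d_geo unfolding d_defs
      using e1 e2 e3 by algebra
  qed
  finally show ?thesis unfolding y_def .
qed


definition "Afun l1 l2 l3 w e h =
   l1/nA l1 w e^3*((gX3 l1 l2 l3 w e - gX2 l3 w e)*d23x h + (gZ3 l1 l2 l3 w e - zB w e)*d23z h)^2
 + l2/nB l2 w e^3*(gX3 l1 l2 l3 w e*d13x h + (gZ3 l1 l2 l3 w e - zA w e)*d13z h)^2
 + l3/nC l3 w e^3*(gX2 l3 w e*d12x h + (zB w e - zA w e)*d12z h)^2"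
definition "Bf h = c1 h^2 + c3 h^2"
definition "Efun l1 l2 l3 w e h = c1 w/nA l1 w e*(d23x h^2 + d23z h^2) + c2 w/nB l2 w e*(d13x h^2 + d13z h^2)
   + c3 w/nC l3 w e*(d12x h^2 + d12z h^2)"

lemma sh_alg: "k*((1-L/N)*(p*p+q*q) + L / N^3 * r * r) = k*(1-L/N)*(p^2+q^2) + k*(L / N^3 * r^2)" for k L N p q r :: real
  by (cases "N=0") (simp_all add: field_simps power2_eq_square)

lemma hess_geo:
  assumes g: "good l1 l2 l3 w e" and ke: "ks * fst e = 1"
  shows "Hg ks knp l1 l2 l3 (geo l1 l2 l3 w e) h h = ks * Afun l1 l2 l3 w e h + knp * Bf h + Efun l1 l2 l3 w e h"
proof -
  note f = good_facts[OF g] and gf = geo_facts[OF g]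
  have k1: "ks*(1 - l1/nA l1 w e) = c1 w/nA l1 w e" using f(1) ke by (simp add: nA_def field_simps)
  have k2: "ks*(1 - l2/nB l2 w e) = c2 w/nB l2 w e" using f(2) ke by (simp add: nB_def field_simps)
  have k3: "ks*(1 - l3/nC l3 w e) = c3 w/nC l3 w e" using f(3) ke by (simp add: nC_def field_simps)
  have sp: "SH k L a b y h h = k*(1 - L/NN a b y)*(a h^2 + b h^2) + k*(L/NN a b y^3*(a y*a h + b y*b h)^2)"
    for k L a b y unfolding SH_def by (rule sh_alg)
  show ?thesis
    unfolding Hg_def sp gf(1,2,3) k1 k2 k3 Afun_def Bf_def Efun_def d_geo
    by (simp add: algebra_simps power2_eq_square)
qed

lemma AB_pos:
  assumes g: "good l1 l2 l3 w e" and l: "l1 > 0" "l2 > 0" "l3 > 0" and h: "h \<noteq> 0"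
  shows "Afun l1 l2 l3 w e h + Bf h > 0"
proof (rule ccontr)
  assume "\<not> ?thesis"
  note f = good_facts[OF g] and gf = geo_facts[OF g]
  define P Q R S X Z where "P = gX3 l1 l2 l3 w e" "Q = gZ3 l1 l2 l3 w e - zA w e"
    "R = gX3 l1 l2 l3 w e - gX2 l3 w e" "S = gZ3 l1 l2 l3 w e - zB w e" "X = gX2 l3 w e" "Z = zB w e - zA w e"
  have DD: "P*S - R*Q \<noteq> 0" using gf(5) unfolding gD_def P_Q_R_S_X_Z_def by simp
  have X: "X > 0" using f(4) by (simp add: P_Q_R_S_X_Z_def)
  have t1: "l1/nA l1 w e^3*(R*d23x h + S*d23z h)^2 \<ge> 0" using f l by simp
  have t2: "l2/nB l2 w e^3*(P*d13x h + Q*d13z h)^2 \<ge> 0" using f l by simp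
  have t3: "l3/nC l3 w e^3*(X*d12x h + Z*d12z h)^2 \<ge> 0" using f l by simp
  have "Afun l1 l2 l3 w e h + Bf h = l1/nA l1 w e^3*(R*d23x h + S*d23z h)^2 + l2/nB l2 w e^3*(P*d13x h + Q*d13z h)^2
     + l3/nC l3 w e^3*(X*d12x h + Z*d12z h)^2 + (c1 h^2 + c3 h^2)"
    unfolding Afun_def Bf_def P_Q_R_S_X_Z_def by simp
  with \<open>\<not> ?thesis\<close> t1 t2 t3 have z: "l1/nA l1 w e^3*(R*d23x h + S*d23z h)^2 = 0"
    "l2/nB l2 w e^3*(P*d13x h + Q*d13z h)^2 = 0" "l3/nC l3 w e^3*(X*d12x h + Z*d12z h)^2 = 0"
    "c1 h^2 + c3 h^2 = 0"
    by (smt (verit, best) zero_le_power2)+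
  have h13: "c1 h = 0" "c3 h = 0" using z(4) by (simp_all add: sum_power2_eq_zero_iff)
  have e1: "R*d23x h + S*d23z h = 0" "P*d13x h + Q*d13z h = 0" "X*d12x h + Z*d12z h = 0"
    using z(1-3) f l by auto
  have h2: "c2 h = 0" using e1(3) h13 X by (simp add: d_defs)
  have e4: "R * c4 h + S * c5 h = 0" "P * c4 h + Q * c5 h = 0" using e1(1,2) h13 h2 by (simp_all add: d_defs)
  have "c4 h * (P*S - R*Q) = 0" using e4 by algebra
  then have h4: "c4 h = 0" using DD by simp
  have "c5 h * (P*S - R*Q) = 0" using e4 by algebra
  then have h5: "c5 h = 0" using DD by simp
  obtain a b c d ee where hh: "h = (a,b,c,d,ee)" by (cases h) auto
  show False using h h13 h2 h4 h5 unfolding hh by (simp add: zero_prod_def)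
qed


lemma cont_cd[continuous_intros]:
  assumes "continuous_on S f"
  shows "continuous_on S (\<lambda>x. c1 (f x))" "continuous_on S (\<lambda>x. c2 (f x))" "continuous_on S (\<lambda>x. c3 (f x))"
    "continuous_on S (\<lambda>x. c4 (f x))" "continuous_on S (\<lambda>x. c5 (f x))"
    "continuous_on S (\<lambda>x. d12x (f x))" "continuous_on S (\<lambda>x. d12z (f x))" "continuous_on S (\<lambda>x. d13x (f x))"
    "continuous_on S (\<lambda>x. d13z (f x))" "continuous_on S (\<lambda>x. d23x (f x))" "continuous_on S (\<lambda>x. d23z (f x))"
  unfolding d_defs c1_def c2_def c3_def c4_def c5_def using assms by (auto intro!: continuous_intros)

context
  fixes l1 l2 l3 :: real and S :: "'z::topological_space set" and W :: "'z \<Rightarrow> rconfig" and E :: "'z \<Rightarrow> real \<times> real"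
  assumes cW: "continuous_on S W" and cE: "continuous_on S E"
    and gd: "\<And>x. x \<in> S \<Longrightarrow> good l1 l2 l3 (W x) (E x)"
begin

lemma cont_n: "continuous_on S (\<lambda>x. nA l1 (W x) (E x))" "continuous_on S (\<lambda>x. nB l2 (W x) (E x))"
  "continuous_on S (\<lambda>x. nC l3 (W x) (E x))" "continuous_on S (\<lambda>x. zA (W x) (E x))" "continuous_on S (\<lambda>x. zB (W x) (E x))"
  unfolding nA_def nB_def nC_def zA_def zB_def using cW cE by (auto intro!: continuous_intros)

lemma cont_X2: "continuous_on S (\<lambda>x. gX2 l3 (W x) (E x))"
  unfolding gX2_def by (intro continuous_intros cont_n)

lemma cont_T: "continuous_on S (\<lambda>x. gT l1 l2 l3 (W x) (E x))"
  unfolding gT_def using good_facts(3)[OF gd] by (intro continuous_intros cont_n) force+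

lemma cont_H: "continuous_on S (\<lambda>x. gH l1 l2 l3 (W x) (E x))"
  unfolding gH_def by (intro continuous_intros cont_n cont_T)

lemma cont_X3: "continuous_on S (\<lambda>x. gX3 l1 l2 l3 (W x) (E x))"
  unfolding gX3_def using good_facts(3)[OF gd] by (intro continuous_intros cont_n cont_T cont_H cont_X2) force+

lemma cont_Z3: "continuous_on S (\<lambda>x. gZ3 l1 l2 l3 (W x) (E x))"
  unfolding gZ3_def using good_facts(3)[OF gd] by (intro continuous_intros cont_n cont_T cont_H cont_X2) force+

lemma cont_D: "continuous_on S (\<lambda>x. gD l1 l2 l3 (W x) (E x))"
  unfolding gD_def by (intro continuous_intros cont_n cont_X3 cont_Z3 cont_X2)

lemma cont_t: "continuous_on S (\<lambda>x. t13 l1 l2 l3 (W x) (E x))" "continuous_on S (\<lambda>x. t23 l1 l2 l3 (W x) (E x))"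
   "continuous_on S (\<lambda>x. t12 l1 l2 l3 (W x) (E x))"
proof -
  have D: "x \<in> S \<Longrightarrow> gD l1 l2 l3 (W x) (E x) \<noteq> 0" for x using geo_facts(5)[OF gd] by fastforce
  have X: "x \<in> S \<Longrightarrow> gX2 l3 (W x) (E x) \<noteq> 0" for x using good_facts(4)[OF gd] by fastforce
  show c13: "continuous_on S (\<lambda>x. t13 l1 l2 l3 (W x) (E x))" unfolding t13_def
    using D by (intro continuous_intros cont_D cont_X3 cont_X2) auto
  show c23: "continuous_on S (\<lambda>x. t23 l1 l2 l3 (W x) (E x))" unfolding t23_def
    using D by (intro continuous_intros cont_D cont_X3 cont_X2) auto
  show "continuous_on S (\<lambda>x. t12 l1 l2 l3 (W x) (E x))" unfolding t12_def
    using X by (intro continuous_intros c23 cont_X3 cont_X2) auto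
qed

lemma cont_Psi: "continuous_on S (\<lambda>x. Psi l1 l2 l3 (W x) (E x))"
  unfolding Psi_def by (intro continuous_intros cont_t cont_n cont_Z3)

lemma cont_AE:
  assumes cH: "continuous_on S Hh"
  shows "continuous_on S (\<lambda>x. Afun l1 l2 l3 (W x) (E x) (Hh x) + Bf (Hh x))"
    "continuous_on S (\<lambda>x. Efun l1 l2 l3 (W x) (E x) (Hh x))"
proof -
  have n: "x \<in> S \<Longrightarrow> nA l1 (W x) (E x) \<noteq> 0 \<and> nB l2 (W x) (E x) \<noteq> 0 \<and> nC l3 (W x) (E x) \<noteq> 0" for x
    using good_facts(1-3)[OF gd] by fastforce
  show "continuous_on S (\<lambda>x. Afun l1 l2 l3 (W x) (E x) (Hh x) + Bf (Hh x))"
    unfolding Afun_def Bf_def using n cH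
    by (intro continuous_intros cont_n cont_X3 cont_X2 cont_Z3) auto
  show "continuous_on S (\<lambda>x. Efun l1 l2 l3 (W x) (E x) (Hh x))"
    unfolding Efun_def using n cH cW
    by (intro continuous_intros cont_n) auto
qed

end


lemma c_scale: "c1 (r *\<^sub>R h) = r * c1 h" "c2 (r *\<^sub>R h) = r * c2 h" "c3 (r *\<^sub>R h) = r * c3 h"
  "c4 (r *\<^sub>R h) = r * c4 h" "c5 (r *\<^sub>R h) = r * c5 h"
  by (simp_all add: c1_def c2_def c3_def c4_def c5_def)

lemma hom_alg: "k*(A*((r*p)*(r*p)+(r*q)*(r*q)) + Bc*(u*(r*p)+v * (r*q))*(u*(r*p)+v * (r*q)))
   = r^2*(k*(A*(p*p+q*q) + Bc*(u*p+v * q)*(u*p+v * q)))" for k A r p q Bc u v :: real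
  by algebra

lemma d_scale: "d12x (r *\<^sub>R h) = r * d12x h" "d12z (r *\<^sub>R h) = r * d12z h" "d13x (r *\<^sub>R h) = r * d13x h"
  "d13z (r *\<^sub>R h) = r * d13z h" "d23x (r *\<^sub>R h) = r * d23x h" "d23z (r *\<^sub>R h) = r * d23z h"
  unfolding d_defs c_scale by (simp_all add: right_diff_distrib)

lemma Hg_hom: "Hg ks knp l1 l2 l3 y (r *\<^sub>R h) (r *\<^sub>R h) = r^2 * Hg ks knp l1 l2 l3 y h h"
  unfolding Hg_def SH_def d_scale c_scale hom_alg by (simp add: distrib_left power2_eq_square mult.assoc mult.left_commute)

lemma cont_NN: "continuous_on S (\<lambda>z. NN d12x d12z (fst z))" "continuous_on S (\<lambda>z. NN d13x d13z (fst z))"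
   "continuous_on S (\<lambda>z. NN d23x d23z (fst z))"
  unfolding NN_def by (intro continuous_intros continuous_on_fst continuous_on_id)+

lemma cont_SH:
  assumes "continuous_on S (\<lambda>z. NN a b (fst z))" "\<And>z. z \<in> S \<Longrightarrow> NN a b (fst z) \<noteq> 0"
    "continuous_on S (\<lambda>z. a (fst z))" "continuous_on S (\<lambda>z. b (fst z))"
    "continuous_on S (\<lambda>z. a (snd z))" "continuous_on S (\<lambda>z. b (snd z))"
  shows "continuous_on S (\<lambda>z. SH k L a b (fst z) (snd z) (snd z))"
  unfolding SH_def using assms by (intro continuous_intros) auto

lemma cont_Hg: "continuous_on (Sm \<times> UNIV) (\<lambda>z. Hg ks knp l1 l2 l3 (fst z) (snd z) (snd z))"
proof -
  have n: "z \<in> Sm \<times> UNIV \<Longrightarrow> NN d12x d12z (fst z) \<noteq> 0 \<and> NN d13x d13z (fst z) \<noteq> 0 \<and> NN d23x d23z (fst z) \<noteq> 0" for z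
    by (auto simp: Sm_def NN_def)
  have cf: "continuous_on (Sm \<times> UNIV) (fst :: rconfig \<times> rconfig \<Rightarrow> rconfig)"
    "continuous_on (Sm \<times> UNIV) (snd :: rconfig \<times> rconfig \<Rightarrow> rconfig)"
    by (intro continuous_intros)+
  note cc = cont_cd[OF cf(1)] cont_cd[OF cf(2)]
  have s: "continuous_on (Sm \<times> UNIV) (\<lambda>z. SH ks l1 d23x d23z (fst z) (snd z) (snd z))"
    "continuous_on (Sm \<times> UNIV) (\<lambda>z. SH ks l2 d13x d13z (fst z) (snd z) (snd z))"
    "continuous_on (Sm \<times> UNIV) (\<lambda>z. SH ks l3 d12x d12z (fst z) (snd z) (snd z))"
    by (rule cont_SH; (rule cont_NN cc)?; use n in blast)+
  show ?thesis unfolding Hg_def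
    by (intro continuous_intros s cc)
qed

lemma norm_c: "\<bar>c1 y\<bar> \<le> norm y" "\<bar>c2 y\<bar> \<le> norm y" "\<bar>c3 y\<bar> \<le> norm y" "\<bar>c4 y\<bar> \<le> norm y" "\<bar>c5 y\<bar> \<le> norm y"
proof -
  obtain a b c d e where y: "y = (a,b,c,d,e)" by (cases y) auto
  have n: "norm y = sqrt (a^2 + (b^2 + (c^2 + (d^2 + e^2))))" unfolding y by (simp add: norm_Pair)
  show "\<bar>c1 y\<bar> \<le> norm y" unfolding n by (simp add: y real_le_rsqrt)
  show "\<bar>c2 y\<bar> \<le> norm y" unfolding n by (simp add: y real_le_rsqrt)
  show "\<bar>c3 y\<bar> \<le> norm y" unfolding n by (simp add: y real_le_rsqrt)
  show "\<bar>c4 y\<bar> \<le> norm y" unfolding n by (simp add: y real_le_rsqrt)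
  show "\<bar>c5 y\<bar> \<le> norm y" unfolding n by (simp add: y real_le_rsqrt)
qed

lemma A_nonneg: assumes "good l1 l2 l3 w e" "l1 > 0" "l2 > 0" "l3 > 0" shows "Afun l1 l2 l3 w e h \<ge> 0"
  using good_facts(1-3)[OF assms(1)] assms(2-4) unfolding Afun_def by (intro add_nonneg_nonneg) simp_all

lemma at0: "nA l1 w (0,0) = l1" "nB l2 w (0,0) = l2" "nC l3 w (0,0) = l3" "zA w (0,0) = 0" "zB w (0,0) = 0"
  by (simp_all add: nA_def nB_def nC_def zA_def zB_def)

lemma Psi0: "Psi l1 l2 l3 w (0,0) = Psi l1 l2 l3 0 (0,0)" "gZ3 l1 l2 l3 w (0,0) = gZ3 l1 l2 l3 0 (0,0)"
  unfolding Psi_def t12_def t13_def t23_def gD_def gZ3_def gX3_def gX2_def gH_def gT_def at0 by simp_all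




lemma good_small:
  fixes l1 l2 l3 M m0 \<eta> :: real
  assumes l: "l1 > 0" "l2 > 0" "l3 > 0"
    and m: "4*m0 \<le> l3" "4*m0 \<le> l1+l2-l3" "4*m0 \<le> l1+l3-l2" "4*m0 \<le> l2+l3-l1" "m0 > 0"
    and w: "\<bar>c1 w\<bar> \<le> M" "\<bar>c2 w\<bar> \<le> M" "\<bar>c3 w\<bar> \<le> M" "\<bar>c4 w\<bar> \<le> M" "\<bar>c5 w\<bar> \<le> M"
    and e: "0 \<le> fst e" "fst e \<le> \<eta>" "0 \<le> snd e" "snd e \<le> \<eta>" and em: "\<eta>*M \<le> m0"
  shows "good l1 l2 l3 w e"
proof -
  have b: "\<bar>fst e * c1 w\<bar> \<le> m0" "\<bar>fst e * c2 w\<bar> \<le> m0" "\<bar>fst e * c3 w\<bar> \<le> m0"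
     "\<bar>snd e * c4 w\<bar> \<le> m0" "\<bar>snd e * c5 w\<bar> \<le> m0"
    using mult_mono[OF _ w(1), of "\<bar>fst e\<bar>" \<eta>] mult_mono[OF _ w(2), of "\<bar>fst e\<bar>" \<eta>]
      mult_mono[OF _ w(3), of "\<bar>fst e\<bar>" \<eta>] mult_mono[OF _ w(4), of "\<bar>snd e\<bar>" \<eta>]
      mult_mono[OF _ w(5), of "\<bar>snd e\<bar>" \<eta>] e em
    by (auto simp: abs_mult)
  have nC: "nC l3 w e \<ge> l3 - m0" using b(3) unfolding nC_def by linarith
  have dz: "\<bar>zB w e - zA w e\<bar> < nC l3 w e" using b(4,5) nC m unfolding zA_def zB_def by linarith
  have "\<bar>zB w e - zA w e\<bar>^2 < nC l3 w e^2"
    by (rule power_strict_mono) (use dz in auto)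
  then have "(zB w e - zA w e)^2 < nC l3 w e^2" by simp
  then show ?thesis unfolding good_def using b nC m unfolding nA_def nB_def nC_def by (auto simp: abs_le_iff)
qed

lemma at_zero:
  fixes l1 l2 l3 :: real
  assumes l: "l1 > 0" "l2 > 0" "l3 > 0" "l1 < l2 + l3" "l2 < l1 + l3" "l3 < l1 + l2"
  shows "good l1 l2 l3 w (0,0)" "gZ3 l1 l2 l3 w (0,0) > 0"
    "c4 (Psi l1 l2 l3 w (0,0)) = 2 - gT l1 l2 l3 w (0,0) / l3"
    "c5 (Psi l1 l2 l3 w (0,0)) = 1 + gT l1 l2 l3 w (0,0) / l3"
    "gT l1 l2 l3 w (0,0) = (l2^2 + l3^2 - l1^2)/(2*l3)"
proof -
  show g: "good l1 l2 l3 w (0,0)" using l unfolding good_def at0 by simp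
  note f = good_facts[OF g] and gf = geo_facts[OF g]
  have X2: "gX2 l3 w (0,0) = l3" using l by (simp add: gX2_def at0)
  have X3: "gX3 l1 l2 l3 w (0,0) = gT l1 l2 l3 w (0,0)" using l unfolding gX3_def at0 X2 by simp
  have Z3: "gZ3 l1 l2 l3 w (0,0) = gH l1 l2 l3 w (0,0)" using l unfolding gZ3_def at0 X2 by simp
  show "gZ3 l1 l2 l3 w (0,0) > 0" using Z3 f(5) by simp
  have D: "gD l1 l2 l3 w (0,0) = gH l1 l2 l3 w (0,0) * l3" using gf(4) by (simp add: at0)
  show "c4 (Psi l1 l2 l3 w (0,0)) = 2 - gT l1 l2 l3 w (0,0) / l3"
    using f(5) l unfolding Psi_def t13_def D X3 Z3 X2 by (simp add: at0 field_simps)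
  show "c5 (Psi l1 l2 l3 w (0,0)) = 1 + gT l1 l2 l3 w (0,0) / l3"
    using f(5) l unfolding Psi_def t23_def D X3 Z3 X2 by (simp add: at0 field_simps)
  show "gT l1 l2 l3 w (0,0) = (l2^2 + l3^2 - l1^2)/(2*l3)" by (simp add: gT_def at0)
qed


lemma c_diff: "c4 (a - b) = c4 a - c4 b" "c5 (a - b) = c5 a - c5 b"
  by (simp_all add: c4_def c5_def)

lemma main3:
  fixes l1 l2 l3 :: real
  assumes l: "l1 > 0" "l2 > 0" "l3 > 0" "l1 < l2 + l3" "l2 < l1 + l3" "l3 < l1 + l2"
    and lg: "l1 \<le> l3" "l2 \<le> l3"
  shows "\<exists>Ks Knp. \<forall>ks knp. ks \<ge> Ks \<and> knp \<ge> Knp \<longrightarrow>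
           (\<exists>p. nondeg_local_min (Uhat ks knp l1 l2 l3) rconfig_space p)"
proof -
  define w0 where "w0 = Psi l1 l2 l3 0 (0,0)"
  have Pw0: "Psi l1 l2 l3 w (0,0) = w0" for w using Psi0 by (simp add: w0_def)
  define t0 where "t0 = (l2^2 + l3^2 - l1^2)/(2*l3)"
  have sq: "l1^2 \<le> l3^2" "l2^2 \<le> l3^2" using lg l by (auto intro: power_mono)
  have n1: "0 \<le> l2^2 + l3^2 - l1^2" using sq(1) zero_le_power2[of l2] by linarith
  have "l2^2 + l3^2 - l1^2 \<le> l3^2 + l3^2" using sq(2) zero_le_power2[of l1] by linarith
  moreover have "l3^2 + l3^2 = l3 * (2*l3)" by (simp add: power2_eq_square)
  ultimately have n2: "l2^2 + l3^2 - l1^2 \<le> l3 * (2*l3)" by simp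
  have t0: "0 \<le> t0" "t0 \<le> l3" using n1 n2 l(3) unfolding t0_def by (auto simp: divide_le_eq)
  have e4: "c4 w0 = 2 - t0/l3" "c5 w0 = 1 + t0/l3"
    using at_zero(3,4,5)[OF l, of 0] unfolding w0_def t0_def by simp_all
  have "t0/l3 \<le> 1" "t0/l3 \<ge> 0" using t0 l(3) by (simp_all add: divide_le_eq)
  then have a0: "c4 w0 \<ge> 1" "c5 w0 \<ge> 1" using e4 by linarith+
  define \<rho> where "\<rho> = (1/2::real)"
  define M where "M = norm w0 + 1"
  define m0 where "m0 = min (min l3 (l1+l2-l3)) (min (l1+l3-l2) (l2+l3-l1)) / 4"
  define \<eta> where "\<eta> = m0 / M"
  have M: "M > 0" unfolding M_def using norm_ge_zero[of w0] by linarith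
  have m0: "m0 > 0" "4*m0 \<le> l3" "4*m0 \<le> l1+l2-l3" "4*m0 \<le> l1+l3-l2" "4*m0 \<le> l2+l3-l1"
    using l by (auto simp: m0_def)
  have \<eta>: "\<eta> > 0" "\<eta> * M \<le> m0" using M m0 by (auto simp: \<eta>_def)
  define DK where "DK = cball w0 \<rho> \<times> cbox (0::real,0::real) (\<eta>,\<eta>)"
  have DKgood: "good l1 l2 l3 (fst z) (snd z)" if z: "z \<in> DK" for z
  proof -
    have nw: "norm (fst z) \<le> M" using z norm_triangle_sub[of "fst z" w0]
      by (auto simp: DK_def M_def \<rho>_def dist_norm norm_minus_commute)
    have e: "0 \<le> fst (snd z)" "fst (snd z) \<le> \<eta>" "0 \<le> snd (snd z)" "snd (snd z) \<le> \<eta>"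
      using z by (auto simp: DK_def cbox_Pair_eq mem_Times_iff)
    show ?thesis
      by (rule good_small[OF l(1-3) m0(2-5,1) _ _ _ _ _ e \<eta>(2)]) (use norm_c[of "fst z"] nw in auto)
  qed
  have cDK: "compact DK" unfolding DK_def by (intro compact_Times compact_cball compact_cbox)
  have cPsi: "continuous_on DK (\<lambda>z. Psi l1 l2 l3 (fst z) (snd z))"
    by (rule cont_Psi[OF continuous_on_fst[OF continuous_on_id] continuous_on_snd[OF continuous_on_id]])
       (use DKgood in auto)
  obtain \<delta>1 where \<delta>1: "\<delta>1 > 0" "\<And>z z'. z \<in> DK \<Longrightarrow> z' \<in> DK \<Longrightarrow> dist z' z < \<delta>1 \<Longrightarrow>
      dist (Psi l1 l2 l3 (fst z') (snd z')) (Psi l1 l2 l3 (fst z) (snd z)) < \<rho>"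
    using compact_uniformly_continuous[OF cPsi cDK, unfolded uniformly_continuous_on_def, rule_format, of \<rho>]
    by (auto simp: \<rho>_def)
  define h0 where "h0 = gZ3 l1 l2 l3 0 (0,0)"
  have h0: "h0 > 0" "\<And>w. gZ3 l1 l2 l3 w (0,0) = h0" using at_zero(2)[OF l] Psi0(2) by (auto simp: h0_def)
  have cZ: "continuous_on DK (\<lambda>z. gZ3 l1 l2 l3 (fst z) (snd z))"
    by (rule cont_Z3[OF continuous_on_fst[OF continuous_on_id] continuous_on_snd[OF continuous_on_id]])
       (use DKgood in auto)
  obtain \<delta>2 where \<delta>2: "\<delta>2 > 0" "\<And>z z'. z \<in> DK \<Longrightarrow> z' \<in> DK \<Longrightarrow> dist z' z < \<delta>2 \<Longrightarrow>
      dist (gZ3 l1 l2 l3 (fst z') (snd z')) (gZ3 l1 l2 l3 (fst z) (snd z)) < h0"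
    using compact_uniformly_continuous[OF cZ cDK, unfolded uniformly_continuous_on_def, rule_format, OF h0(1)]
    by auto
  define K3 where "K3 = DK \<times> sphere (0::rconfig) 1"
  have cK3: "compact K3" unfolding K3_def by (intro compact_Times cDK compact_sphere)
  have K3ne: "K3 \<noteq> {}"
  proof -
    have "(w0, (0::real,0::real)) \<in> DK" using \<eta> by (auto simp: DK_def \<rho>_def cbox_Pair_eq mem_Times_iff)
    moreover have "sphere (0::rconfig) 1 \<noteq> {}" by simp
    ultimately show ?thesis unfolding K3_def by auto
  qed
  have K3good: "z \<in> K3 \<Longrightarrow> good l1 l2 l3 (fst (fst z)) (snd (fst z))" for z
    using DKgood by (auto simp: K3_def)
  note cAE = cont_AE[of K3 "\<lambda>z. fst (fst z)" "\<lambda>z. snd (fst z)" l1 l2 l3 snd,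
      OF _ _ K3good continuous_on_snd[OF continuous_on_id]]
  have cAB: "continuous_on K3 (\<lambda>z. Afun l1 l2 l3 (fst (fst z)) (snd (fst z)) (snd z) + Bf (snd z))"
    by (rule cAE(1)) (intro continuous_intros)+
  have cEf: "continuous_on K3 (\<lambda>z. Efun l1 l2 l3 (fst (fst z)) (snd (fst z)) (snd z))"
    by (rule cAE(2)) (intro continuous_intros)+
  obtain zA0 where zA0: "zA0 \<in> K3" "\<And>z. z \<in> K3 \<Longrightarrow>
      Afun l1 l2 l3 (fst (fst zA0)) (snd (fst zA0)) (snd zA0) + Bf (snd zA0)
      \<le> Afun l1 l2 l3 (fst (fst z)) (snd (fst z)) (snd z) + Bf (snd z)"
    using continuous_attains_inf[OF cK3 K3ne cAB] by blast
  define cA where "cA = Afun l1 l2 l3 (fst (fst zA0)) (snd (fst zA0)) (snd zA0) + Bf (snd zA0)"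
  have cA: "cA > 0" unfolding cA_def
    by (rule AB_pos[OF K3good[OF zA0(1)] l(1-3)]) (use zA0(1) in \<open>auto simp: K3_def\<close>)
  obtain zE0 where zE0: "zE0 \<in> K3" "\<And>z. z \<in> K3 \<Longrightarrow>
      Efun l1 l2 l3 (fst (fst zE0)) (snd (fst zE0)) (snd zE0)
      \<le> Efun l1 l2 l3 (fst (fst z)) (snd (fst z)) (snd z)"
    using continuous_attains_inf[OF cK3 K3ne cEf] by blast
  define Emin where "Emin = Efun l1 l2 l3 (fst (fst zE0)) (snd (fst zE0)) (snd zE0)"
  define \<delta> where "\<delta> = min \<eta> (min (\<delta>1/4) (\<delta>2/4))"
  have \<delta>: "\<delta> > 0" "\<delta> \<le> \<eta>" "2*\<delta> < \<delta>1" "2*\<delta> < \<delta>2" using \<eta> \<delta>1 \<delta>2 by (auto simp: \<delta>_def)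
  define Ks where "Ks = max (1/\<delta>) ((\<bar>Emin\<bar> + 1)/cA)"
  have Ks: "Ks > 0" "Ks * cA \<ge> \<bar>Emin\<bar> + 1" "Ks \<ge> 1/\<delta>" using \<delta> cA
  proof -
    have a: "1/\<delta> > 0" using \<delta>(1) by simp
    have b: "(\<bar>Emin\<bar> + 1)/cA \<le> Ks" "1/\<delta> \<le> Ks" by (simp_all add: Ks_def)
    show "Ks > 0" using a b by linarith
    show "Ks \<ge> 1/\<delta>" using b by simp
    have "(\<bar>Emin\<bar> + 1)/cA * cA \<le> Ks * cA" by (rule mult_right_mono[OF b(1)]) (use cA in simp)
    then show "Ks * cA \<ge> \<bar>Emin\<bar> + 1" using cA by simp
  qed
  show ?thesis
  proof (intro exI[of _ Ks] allI impI)
    fix ks knp :: real assume kk: "Ks \<le> ks \<and> Ks \<le> knp"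
    have kpos: "ks > 0" "knp > 0" using kk Ks by auto
    define e where "e = (1/ks, 1/knp)"
    have e1: "0 < fst e" "fst e \<le> \<delta>" "0 < snd e" "snd e \<le> \<delta>"
    proof -
      have "1/ks \<le> 1/Ks" "1/knp \<le> 1/Ks" using kk Ks(1) by (auto simp: divide_simps)
      moreover have "1/Ks \<le> \<delta>" using Ks \<delta>(1) by (auto simp: field_simps)
      ultimately show "0 < fst e" "fst e \<le> \<delta>" "0 < snd e" "snd e \<le> \<delta>" using kpos by (auto simp: e_def)
    qed
    have ke: "ks * fst e = 1" "knp * snd e = 1" using kpos by (auto simp: e_def)
    have inDK: "(w, e) \<in> DK" "(w, (0,0)) \<in> DK" if "w \<in> cball w0 \<rho>" for w
      using that e1 \<delta>(2) \<eta>(1) by (auto simp: DK_def cbox_Pair_eq mem_Times_iff)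
    have dst: "dist (w, e) (w, (0::real, 0::real)) < min \<delta>1 \<delta>2" for w
    proof -
      have "dist (w, e) (w, (0::real, 0::real)) = sqrt ((fst e)^2 + (snd e)^2)"
        using kpos by (simp add: dist_Pair_Pair e_def)
      also have "\<dots> \<le> \<bar>fst e\<bar> + \<bar>snd e\<bar>" by (rule sqrt_sum_squares_le_sum_abs)
      also have "\<dots> \<le> 2*\<delta>" using e1 by simp
      also have "\<dots> < min \<delta>1 \<delta>2" using \<delta> by simp
      finally show ?thesis .
    qed
    have close: "dist (Psi l1 l2 l3 w e) w0 < \<rho>" if w: "w \<in> cball w0 \<rho>" for w
      using \<delta>1(2)[OF inDK(2)[OF w] inDK(1)[OF w]] dst[of w] Pw0[of w] by simp
    have cgood: "good l1 l2 l3 w e" if "w \<in> cball w0 \<rho>" for w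
      using DKgood[OF inDK(1)[OF that]] by simp
    have cP: "continuous_on (cball w0 \<rho>) (\<lambda>w. Psi l1 l2 l3 w e)"
      by (rule cont_Psi[OF continuous_on_id continuous_on_const]) (use cgood in auto)
    obtain ws where ws: "ws \<in> cball w0 \<rho>" "Psi l1 l2 l3 ws e = ws"
      apply (rule brouwer_ball[OF _ cP])
      using close by (auto simp: \<rho>_def dist_commute less_imp_le)
    have g: "good l1 l2 l3 ws e" using cgood[OF ws(1)] .
    note f = good_facts[OF g] and gf = geo_facts[OF g]
    define p where "p = geo l1 l2 l3 ws e"
    have Z3: "gZ3 l1 l2 l3 ws e > 0"
      using \<delta>2(2)[OF inDK(2)[OF ws(1)] inDK(1)[OF ws(1)]] dst[of ws] h0 by (auto simp: dist_real_def)
    have a45: "c4 ws > 0" "c5 ws > 0"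
    proof -
      have "norm (ws - w0) \<le> 1/2" using ws(1) by (simp add: \<rho>_def dist_norm norm_minus_commute)
      then have h: "\<bar>c4 ws - c4 w0\<bar> \<le> 1/2" "\<bar>c5 ws - c5 w0\<bar> \<le> 1/2"
        using norm_c(4,5)[of "ws - w0"] by (auto simp: c_diff)
      show "c4 ws > 0" using a0(1) abs_le_D2[OF h(1)] by linarith
      show "c5 ws > 0" using a0(2) abs_le_D2[OF h(2)] by linarith
    qed
    have pOm: "p \<in> Om"
    proof -
      have q: "0 < d12x p^2 + d12z p^2" using f(3,6) by (simp add: p_def)
      have "0 < sqrt (d13x p^2 + d13z p^2)" using gf(2) f(2) unfolding NN_def p_def by simp
      then have r: "0 < d13x p^2 + d13z p^2" by simp
      have "0 < sqrt (d23x p^2 + d23z p^2)" using gf(3) f(1) unfolding NN_def p_def by simp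
      then have s: "0 < d23x p^2 + d23z p^2" by simp
      have "c1 p < 0" "c3 p < 0" "c5 p > 0" using a45 e1 Z3 by (auto simp: p_def zA_def zB_def)
      then show ?thesis using q r s by (simp add: Om_def)
    qed
    have "nondeg_local_min (Uhat ks knp l1 l2 l3) rconfig_space p"
    proof (rule nondeg_crit[where W=Om and Df="Dg ks knp l1 l2 l3" and H="Hg ks knp l1 l2 l3"])
      show "open Om" "p \<in> Om" "Om \<subseteq> rconfig_space" using open_Om pOm Om_space by auto
      show "(Uhat ks knp l1 l2 l3 has_derivative Dg ks knp l1 l2 l3 y) (at y)" if "y \<in> Om" for y
        by (rule has_derivative_transform_within_open[OF g_D open_Om that])
           (use that Om_Sm Uhat_g in auto)
      show "((\<lambda>y. Dg ks knp l1 l2 l3 y h) has_derivative Hg ks knp l1 l2 l3 y h) (at y)" if "y \<in> Om" for y h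
        using Dg_H that Om_Sm by blast
      show "Dg ks knp l1 l2 l3 p h = 0" for h unfolding p_def by (rule crit_geo[OF g ws(2) ke])
      show "continuous_on (Om \<times> sphere 0 1) (\<lambda>z. Hg ks knp l1 l2 l3 (fst z) (snd z) (snd z))"
        by (rule continuous_on_subset[OF cont_Hg]) (use Om_Sm in auto)
      show "Hg ks knp l1 l2 l3 y (r *\<^sub>R h) (r *\<^sub>R h) = r^2 * Hg ks knp l1 l2 l3 y h h" for y h r
        by (rule Hg_hom)
      show "Hg ks knp l1 l2 l3 p h h > 0" if h: "h \<noteq> 0" for h
      proof -
        define u where "u = h /\<^sub>R norm h"
        have u: "u \<in> sphere 0 1" using h by (simp add: u_def)
        have K: "((ws, e), u) \<in> K3" using inDK(1)[OF ws(1)] u by (simp add: K3_def)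
        have AB: "Afun l1 l2 l3 ws e u + Bf u \<ge> cA" using zA0(2)[OF K] by (simp add: cA_def)
        have E: "Efun l1 l2 l3 ws e u \<ge> Emin" using zE0(2)[OF K] by (simp add: Emin_def)
        have A0: "Afun l1 l2 l3 ws e u \<ge> 0" by (rule A_nonneg[OF g l(1-3)])
        have B0: "Bf u \<ge> 0" by (simp add: Bf_def)
        have "ks * Afun l1 l2 l3 ws e u \<ge> Ks * Afun l1 l2 l3 ws e u" using kk A0 by (simp add: mult_right_mono)
        moreover have "knp * Bf u \<ge> Ks * Bf u" using kk B0 by (simp add: mult_right_mono)
        moreover have "Ks * (Afun l1 l2 l3 ws e u + Bf u) \<ge> Ks * cA" using AB Ks(1) by simp
        ultimately have "ks * Afun l1 l2 l3 ws e u + knp * Bf u + Efun l1 l2 l3 ws e u > 0"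
          using Ks(2) E distrib_left[of Ks "Afun l1 l2 l3 ws e u" "Bf u"] by linarith
        then have pu: "Hg ks knp l1 l2 l3 p u u > 0" unfolding p_def hess_geo[OF g ke(1)] .
        have "h = norm h *\<^sub>R u" using h by (simp add: u_def)
        then have "Hg ks knp l1 l2 l3 p h h = (norm h)^2 * Hg ks knp l1 l2 l3 p u u"
          using Hg_hom[of ks knp l1 l2 l3 p "norm h" u] by simp
        then show ?thesis using pu h by simp
      qed
    qed
    then show "\<exists>p. nondeg_local_min (Uhat ks knp l1 l2 l3) rconfig_space p" by blast
  qed
qed




lemma nondeg_transfer:
  fixes g f :: "'a::euclidean_space \<Rightarrow> real" and T Ti :: "'a \<Rightarrow> 'a"
  assumes nd: "nondeg_local_min g S P"
    and fg: "\<And>y. f (T y) = g y" and ST: "\<And>y. y \<in> S \<longleftrightarrow> T y \<in> S'"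
    and lT: "bounded_linear T" and lTi: "bounded_linear Ti"
    and inv1: "\<And>y. Ti (T y) = y" and inv2: "\<And>x. T (Ti x) = x"
  shows "nondeg_local_min f S' (T P)"
proof -
  obtain e Df H where e: "e > 0" "ball P e \<subseteq> S" "\<forall>y\<in>ball P e. g P \<le> g y"
    and D: "\<forall>y\<in>ball P e. (g has_derivative Df y) (at y)"
    and HD: "\<forall>h. ((\<lambda>y. Df y h) has_derivative H h) (at P)"
    and pd: "\<forall>h. h \<noteq> 0 \<longrightarrow> H h h > 0"
    using nd unfolding nondeg_local_min_def by blast
  obtain K where K: "K > 0" "\<And>x. norm (Ti x) \<le> norm x * K"
    using bounded_linear.pos_bounded[OF lTi] by blast
  have feq: "f = (\<lambda>x. g (Ti x))" by (rule ext) (metis fg inv2)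
  have dTi: "(Ti has_derivative Ti) F" for F using lTi by (rule bounded_linear_imp_has_derivative)
  define e' where "e' = e / K"
  have e': "e' > 0" using e K by (simp add: e'_def)
  have inb: "Ti x \<in> ball P e" if x: "x \<in> ball (T P) e'" for x
  proof -
    have "Ti x - P = Ti (x - T P)" using inv1 linear_diff[OF bounded_linear.linear[OF lTi]] by metis
    then have "norm (Ti x - P) \<le> norm (x - T P) * K" using K(2) by metis
    also have "\<dots> < e' * K" using x K(1) by (simp add: dist_norm norm_minus_commute)
    also have "\<dots> = e" using K(1) by (simp add: e'_def)
    finally show ?thesis by (simp add: dist_norm norm_minus_commute)
  qed
  have A: "ball (T P) e' \<subseteq> S'" using inb e(2) ST inv2 by (metis subsetD subsetI)
  have B: "\<forall>y\<in>ball (T P) e'. f (T P) \<le> f y" using inb e(3) fg feq inv1 by simp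
  have C: "\<forall>y\<in>ball (T P) e'. (f has_derivative (\<lambda>h. Df (Ti y) (Ti h))) (at y)"
    unfolding feq using inb D has_derivative_compose[OF dTi] by blast
  have Dd: "\<forall>h. ((\<lambda>y. Df (Ti y) (Ti h)) has_derivative (\<lambda>k. H (Ti h) (Ti k))) (at (T P))"
  proof
    fix h
    have "((\<lambda>y. Df y (Ti h)) has_derivative H (Ti h)) (at (Ti (T P)))" using HD inv1 by simp
    from has_derivative_compose[OF dTi this]
    show "((\<lambda>y. Df (Ti y) (Ti h)) has_derivative (\<lambda>k. H (Ti h) (Ti k))) (at (T P))" .
  qed
  have Ee: "\<forall>h. h \<noteq> 0 \<longrightarrow> H (Ti h) (Ti h) > 0" using pd inv2 by (metis linear_0[OF bounded_linear.linear[OF lT]])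
  show ?thesis unfolding nondeg_local_min_def
    apply (rule exI[of _ e'])
    apply (intro conjI e' A B)
    apply (rule exI[of _ "\<lambda>x h. Df (Ti x) (Ti h)"])
    apply (rule exI[of _ "\<lambda>h k. H (Ti h) (Ti k)"])
    using C Dd Ee by simp
qed

definition Tr :: "rconfig \<Rightarrow> rconfig" where
  "Tr y = (case y of (z1, x2, z2, x3, z3) \<Rightarrow> (z3, - x3, z1, x2 - x3, z2))"
definition Tri :: "rconfig \<Rightarrow> rconfig" where
  "Tri y = (case y of (z1, x2, z2, x3, z3) \<Rightarrow> (z2, x3 - x2, z3, - x2, z1))"

lemma Tr_inv: "Tri (Tr y) = y" "Tr (Tri y) = y"
  by (cases y; simp add: Tr_def Tri_def)+

lemma Tr_lin: "bounded_linear Tr" "bounded_linear Tri"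
proof -
  have eq: "Tr = (\<lambda>y. (c5 y, - c4 y, c1 y, c2 y - c4 y, c3 y))"
    by (rule ext) (simp add: Tr_def c1_def c2_def c3_def c4_def c5_def split: prod.splits)
  show "bounded_linear Tr" unfolding eq
    by (intro bounded_linear_Pair bounded_linear_minus bounded_linear_sub bl_c)
  have eq2: "Tri = (\<lambda>y. (c3 y, c4 y - c2 y, c5 y, - c2 y, c1 y))"
    by (rule ext) (simp add: Tri_def c1_def c2_def c3_def c4_def c5_def split: prod.splits)
  show "bounded_linear Tri" unfolding eq2
    by (intro bounded_linear_Pair bounded_linear_minus bounded_linear_sub bl_c)
qed

lemma Uhat_Tr: "Uhat ks knp l1 l2 l3 (Tr y) = Uhat ks knp l2 l3 l1 y"
proof -
  obtain z1 x2 z2 x3 z3 where y: "y = (z1,x2,z2,x3,z3)" by (cases y) auto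
  show ?thesis unfolding y Uhat_def U_def sect_def Tr_def
    by (simp add: dist_Pair_Pair dist_real_def power2_commute algebra_simps)
qed

lemma space_Tr: "y \<in> rconfig_space \<longleftrightarrow> Tr y \<in> rconfig_space"
proof -
  obtain z1 x2 z2 x3 z3 where y: "y = (z1,x2,z2,x3,z3)" by (cases y) auto
  show ?thesis unfolding y rconfig_space_def sect_def Tr_def config_space_def
    by auto
qed

lemma step:
  assumes "\<exists>Ks Knp. \<forall>ks knp. ks \<ge> Ks \<and> knp \<ge> Knp \<longrightarrow>
           (\<exists>p. nondeg_local_min (Uhat ks knp l2 l3 l1) rconfig_space p)"
  shows "\<exists>Ks Knp. \<forall>ks knp. ks \<ge> Ks \<and> knp \<ge> Knp \<longrightarrow>
           (\<exists>p. nondeg_local_min (Uhat ks knp l1 l2 l3) rconfig_space p)"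
proof -
  obtain Ks Knp where K: "\<And>ks knp. ks \<ge> Ks \<and> knp \<ge> Knp \<Longrightarrow>
           (\<exists>p. nondeg_local_min (Uhat ks knp l2 l3 l1) rconfig_space p)" using assms by blast
  have "\<exists>p. nondeg_local_min (Uhat ks knp l1 l2 l3) rconfig_space p"
    if kk: "ks \<ge> Ks \<and> knp \<ge> Knp" for ks knp :: real
  proof -
    obtain p where p: "nondeg_local_min (Uhat ks knp l2 l3 l1) rconfig_space p" using K[OF kk] by blast
    have "nondeg_local_min (Uhat ks knp l1 l2 l3) rconfig_space (Tr p)"
      by (rule nondeg_transfer[OF p Uhat_Tr space_Tr Tr_lin Tr_inv])
    then show ?thesis by blast
  qed
  then show ?thesis by blast
qed

theorem proposition6:
  fixes l1 l2 l3 :: real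
  assumes "l1 > 0" and "l2 > 0" and "l3 > 0"
    and "l1 < l2 + l3" and "l2 < l1 + l3" and "l3 < l1 + l2"
  shows "\<exists>Ks Knp. \<forall>ks knp. ks \<ge> Ks \<and> knp \<ge> Knp \<longrightarrow>
           (\<exists>p. nondeg_local_min (Uhat ks knp l1 l2 l3) rconfig_space p)"
proof -
  consider "l1 \<le> l3 \<and> l2 \<le> l3" | "l3 \<le> l1 \<and> l2 \<le> l1" | "l1 \<le> l2 \<and> l3 \<le> l2" by linarith
  then show ?thesis
  proof cases
    case 1 then show ?thesis using main3 assms by blast
  next
    case 2
    have "\<exists>Ks Knp. \<forall>ks knp. ks \<ge> Ks \<and> knp \<ge> Knp \<longrightarrow>
           (\<exists>p. nondeg_local_min (Uhat ks knp l2 l3 l1) rconfig_space p)"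
      by (rule main3) (use assms 2 in auto)
    then show ?thesis by (rule step)
  next
    case 3
    have "\<exists>Ks Knp. \<forall>ks knp. ks \<ge> Ks \<and> knp \<ge> Knp \<longrightarrow>
           (\<exists>p. nondeg_local_min (Uhat ks knp l3 l1 l2) rconfig_space p)"
      by (rule main3) (use assms 3 in auto)
    then show ?thesis by (rule step[OF step])
  qed
qed


end
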